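(* Let $X$ be a random variable taking values in a set $\mathcal{X}$, let $Y \in [0,1]$ be a target outcome and let $\hat{Y} \in [0,1]$ be an expert prediction, all jointly distributed. Let $\mathcal{F}$ be a class of functions $\mathcal{X} \to [0,1]$, let $\alpha \ge 0$, and let $S_1, \dots, S_K \subseteq \mathcal{X}$ ($K \ge 1$) be an $\alpha$-multicalibrated partition with respect to $\mathcal{F}$ and $Y$. Let the random variable $J(X) \in [K]$ be defined by $J(X) = k$ iff $X \in S_k$. Define $\gamma^*, \beta^* \in \mathbb{R}^K$ by $$\gamma^*, \beta^* \in \arg\min_{\gamma \in \mathbb{R}^K, \beta \in \mathbb{R}^K} \mathbb{E}\left[\left(Y - \gamma_{J(X)} - \beta_{J(X)} \hat{Y}\right)^2\right].$$ Then for every $f \in \mathcal{F}$ and every $k \in [K]$, $$\mathbb{E}_k\left[\left(Y - \gamma^*_k - \beta^*_k \hat{Y}\right)^2\right] + 4\,\mathrm{Cov}_k(Y, \hat{Y})^2 \le \mathbb{E}_k\left[(Y - f(X))^2\right] + 2\alpha.$$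
   Context: For a subset $S \subseteq \mathcal{X}$ (with $\mathbb{P}(X \in S) > 0$), $\mathbb{E}_S, \mathrm{Var}_S, \mathrm{Cov}_S$ denote expectation, variance and covariance conditional on the event $\{X \in S\}$; $\mathbb{E}_k, \mathrm{Var}_k, \mathrm{Cov}_k$ denote these conditional on $\{X \in S_k\}$. A set $S \subseteq \mathcal{X}$ is $\alpha$-indistinguishable with respect to a function class $\mathcal{F}$ and target $Y$ if $|\mathrm{Cov}(f(X), Y \mid X \in S)| \le \alpha$ for all $f \in \mathcal{F}$. Sets $S_1, \dots, S_K$ form an $\alpha$-multicalibrated partition with respect to $\mathcal{F}$ and $Y$ if they partition $\mathcal{X}$ and each $S_k$ is $\alpha$-indistinguishable with respect to $\mathcal{F}$ and $Y$. *)

theory Defs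
  imports "HOL-Probability.Probability"
begin

text \<open>Expectation conditional on the event X \<in> S (ratio definition; the paper only
uses it when P(X \<in> S) > 0).\<close>
definition cond_exp_on :: "'a measure \<Rightarrow> ('a \<Rightarrow> 'x) \<Rightarrow> 'x set \<Rightarrow> ('a \<Rightarrow> real) \<Rightarrow> real" where
  "cond_exp_on M X S Z =
     (\<integral>\<omega>. indicator S (X \<omega>) * Z \<omega> \<partial>M) / measure M {\<omega> \<in> space M. X \<omega> \<in> S}"

definition cond_cov_on :: "'a measure \<Rightarrow> ('a \<Rightarrow> 'x) \<Rightarrow> 'x set \<Rightarrow> ('a \<Rightarrow> real) \<Rightarrow> ('a \<Rightarrow> real) \<Rightarrow> real" where
  "cond_cov_on M X S A B =
     cond_exp_on M X S (\<lambda>\<omega>. A \<omega> * B \<omega>) - cond_exp_on M X S A * cond_exp_on M X S B"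

definition indistinguishable ::
  "'a measure \<Rightarrow> ('a \<Rightarrow> 'x) \<Rightarrow> ('x \<Rightarrow> real) set \<Rightarrow> ('a \<Rightarrow> real) \<Rightarrow> real \<Rightarrow> 'x set \<Rightarrow> bool" where
  "indistinguishable M X F Y \<alpha> S \<longleftrightarrow> (\<forall>f\<in>F. \<bar>cond_cov_on M X S (\<lambda>\<omega>. f (X \<omega>)) Y\<bar> \<le> \<alpha>)"

definition multicalibrated_partition ::
  "'a measure \<Rightarrow> 'x measure \<Rightarrow> ('a \<Rightarrow> 'x) \<Rightarrow> ('x \<Rightarrow> real) set \<Rightarrow> ('a \<Rightarrow> real) \<Rightarrow> real
    \<Rightarrow> nat \<Rightarrow> (nat \<Rightarrow> 'x set) \<Rightarrow> bool" where
  "multicalibrated_partition M N X F Y \<alpha> K S \<longleftrightarrow>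
     (\<forall>k<K. S k \<subseteq> space N) \<and>
     (\<forall>j<K. \<forall>k<K. j \<noteq> k \<longrightarrow> S j \<inter> S k = {}) \<and>
     (\<Union>k<K. S k) = space N \<and>
     (\<forall>k<K. indistinguishable M X F Y \<alpha> (S k))"

definition part_index :: "nat \<Rightarrow> (nat \<Rightarrow> 'x set) \<Rightarrow> 'x \<Rightarrow> nat" where
  "part_index K S x = (THE k. k < K \<and> x \<in> S k)"

end

theory Submission
  imports Defs
begin

lemma alg:
  fixes L eYY eY eH eYH eHH eF eFF eFY \<alpha> :: real
  assumes "L \<le> eYY - 2*g*eY - 2*b*eYH + g^2 + 2*g*b*eH + b^2*eHH"
    and "g = eY - b*eH" and "b = 4*(eYH - eY*eH)"
    and "eHH \<le> eH" and "eFF \<ge> eF^2" and "\<bar>eFY - eF*eY\<bar> \<le> \<alpha>"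
  shows "L + 4*(eYH - eY*eH)^2 \<le> eYY - 2*eFY + eFF + 2*\<alpha>"
proof -
  define cq where "cq = eYH - eY*eH"
  define vq where "vq = eHH - eH^2"
  have "(eH - 1/2)^2 \<ge> 0" by simp
  moreover have "(eH - 1/2)^2 = eH^2 - eH + 1/4" by (simp add: power2_eq_square algebra_simps)
  ultimately have vq: "vq \<le> 1/4" unfolding vq_def using assms(4) by linarith
  have Q: "eYY - 2*g*eY - 2*b*eYH + g^2 + 2*g*b*eH + b^2*eHH = (eYY - eY^2) + 16*(cq^2* vq) - 8*cq^2"
    unfolding assms(2) assms(3) cq_def vq_def by (simp add: power2_eq_square algebra_simps)
  have "cq^2* vq \<le> cq^2*(1/4)" using vq by (intro mult_left_mono) auto
  hence "L + 4*cq^2 \<le> eYY - eY^2" using assms(1) Q by linarith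
  moreover have "eYY - eY^2 \<le> eYY - 2*eFY + eFF + 2*\<alpha>"
  proof -
    have "(eF - eY)^2 \<ge> 0" by simp
    moreover have "(eF - eY)^2 = eF^2 - 2*(eF*eY) + eY^2" by (simp add: power2_eq_square algebra_simps)
    ultimately show ?thesis using assms(5,6) by (auto simp: abs_le_iff)
  qed
  ultimately show ?thesis unfolding cq_def by linarith
qed

lemma bint:
  assumes "prob_space M" "f \<in> borel_measurable M" "\<And>\<omega>. \<omega> \<in> space M \<Longrightarrow> \<bar>f \<omega>\<bar> \<le> (B::real)"
  shows "integrable M f"
proof -
  interpret prob_space M by fact
  show ?thesis
    proof (rule integrable_const_bound[where B=B])
      show "AE x in M. norm (f x) \<le> B" by (rule AE_I2) (use assms(3) in simp)
    qed (rule assms(2))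
qed

lemma sqbound:
  fixes y h g b :: real
  assumes "0 \<le> y" "y \<le> 1" "0 \<le> h" "h \<le> 1"
  shows "\<bar>indicator A x * (y - g - b*h)^2\<bar> \<le> (1 + \<bar>g\<bar> + \<bar>b\<bar>)^2"
proof -
  have "\<bar>b*h\<bar> \<le> \<bar>b\<bar>" using assms by (simp add: abs_mult mult_left_le)
  hence "\<bar>y - g - b*h\<bar> \<le> 1 + \<bar>g\<bar> + \<bar>b\<bar>" using assms by linarith
  hence "\<bar>y - g - b*h\<bar>^2 \<le> (1 + \<bar>g\<bar> + \<bar>b\<bar>)^2" by (intro power_mono) auto
  moreover have "\<bar>indicator A x * (y - g - b*h)^2\<bar> \<le> \<bar>y - g - b*h\<bar>^2"
    by (simp add: indicator_def)
  ultimately show ?thesis by linarith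
qed

theorem theorem1:
  fixes M :: "'a measure" and N :: "'x measure"
    and X :: "'a \<Rightarrow> 'x" and Y Yh :: "'a \<Rightarrow> real"
    and F :: "('x \<Rightarrow> real) set" and \<alpha> :: real and K :: nat
    and S :: "nat \<Rightarrow> 'x set" and \<gamma> \<beta> :: "nat \<Rightarrow> real"
  assumes "prob_space M"
    and "X \<in> measurable M N"
    and "Y \<in> borel_measurable M" and "Yh \<in> borel_measurable M"
    and "\<forall>\<omega>\<in>space M. 0 \<le> Y \<omega> \<and> Y \<omega> \<le> 1"
    and "\<forall>\<omega>\<in>space M. 0 \<le> Yh \<omega> \<and> Yh \<omega> \<le> 1"
    and "\<forall>f\<in>F. f \<in> borel_measurable N \<and> (\<forall>x\<in>space N. 0 \<le> f x \<and> f x \<le> 1)"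
    and "\<alpha> \<ge> 0" and "K \<ge> 1"
    and "\<forall>k<K. S k \<in> sets N"
    and "multicalibrated_partition M N X F Y \<alpha> K S"
    and "\<forall>g b :: nat \<Rightarrow> real.
           (\<integral>\<omega>. (Y \<omega> - \<gamma> (part_index K S (X \<omega>)) - \<beta> (part_index K S (X \<omega>)) * Yh \<omega>)\<^sup>2 \<partial>M)
         \<le> (\<integral>\<omega>. (Y \<omega> - g (part_index K S (X \<omega>)) - b (part_index K S (X \<omega>)) * Yh \<omega>)\<^sup>2 \<partial>M)"
  shows "\<forall>f\<in>F. \<forall>k<K.
           cond_exp_on M X (S k) (\<lambda>\<omega>. (Y \<omega> - \<gamma> k - \<beta> k * Yh \<omega>)\<^sup>2)
             + 4 * (cond_cov_on M X (S k) Y Yh)\<^sup>2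
         \<le> cond_exp_on M X (S k) (\<lambda>\<omega>. (Y \<omega> - f (X \<omega>))\<^sup>2) + 2 * \<alpha>"
proof (intro ballI allI impI)
  fix f k assume fF: "f \<in> F" and kK: "k < K"
  interpret prob_space M by fact
  note mc = assms(11)[unfolded multicalibrated_partition_def]
  have Xsp: "\<And>\<omega>. \<omega> \<in> space M \<Longrightarrow> X \<omega> \<in> space N"
    by (rule measurable_space[OF assms(2)])
  have Jeq: "part_index K S (X \<omega>) = j" if "\<omega> \<in> space M" "j < K" "X \<omega> \<in> S j" for \<omega> j
    unfolding part_index_def
  proof (rule the_equality)
    show "j < K \<and> X \<omega> \<in> S j" using that by blast
    fix i assume "i < K \<and> X \<omega> \<in> S i"
    then show "i = j" using that mc by blast
  qed
  have cover: "\<exists>j<K. X \<omega> \<in> S j" if "\<omega> \<in> space M" for \<omega>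
    using mc Xsp[OF that] by blast
  have measS: "(\<lambda>\<omega>. indicator (S j) (X \<omega>) :: real) \<in> borel_measurable M" if "j < K" for j
    using measurable_compose[OF assms(2) borel_measurable_indicator] assms(10) that by blast
  have Ym: "\<And>\<omega>. \<omega> \<in> space M \<Longrightarrow> 0 \<le> Y \<omega> \<and> Y \<omega> \<le> 1" using assms(5) by blast
  have Hm: "\<And>\<omega>. \<omega> \<in> space M \<Longrightarrow> 0 \<le> Yh \<omega> \<and> Yh \<omega> \<le> 1" using assms(6) by blast
  have intT: "integrable M (\<lambda>\<omega>. indicator (S j) (X \<omega>) * (Y \<omega> - c - d * Yh \<omega>)^2)"
    if "j < K" for j c d
  proof (rule bint[OF assms(1), where B="(1 + \<bar>c\<bar> + \<bar>d\<bar>)^2"])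
    show "(\<lambda>\<omega>. indicator (S j) (X \<omega>) * (Y \<omega> - c - d * Yh \<omega>)^2) \<in> borel_measurable M"
      using measS[OF that] assms(3,4) by measurable
    fix \<omega> assume "\<omega> \<in> space M"
    then show "\<bar>indicator (S j) (X \<omega>) * (Y \<omega> - c - d * Yh \<omega>)^2\<bar> \<le> (1 + \<bar>c\<bar> + \<bar>d\<bar>)^2"
      using Ym Hm by (intro sqbound) auto
  qed
  define T where "T = (\<lambda>G Bt j. \<integral>\<omega>. indicator (S j) (X \<omega>) * (Y \<omega> - G j - Bt j * Yh \<omega>)^2 \<partial>M)"
  have decomp: "(\<integral>\<omega>. (Y \<omega> - G (part_index K S (X \<omega>)) - Bt (part_index K S (X \<omega>)) * Yh \<omega>)\<^sup>2 \<partial>M)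
      = (\<Sum>j<K. T G Bt j)" for G Bt
  proof -
    have "(\<integral>\<omega>. (Y \<omega> - G (part_index K S (X \<omega>)) - Bt (part_index K S (X \<omega>)) * Yh \<omega>)\<^sup>2 \<partial>M)
      = (\<integral>\<omega>. (\<Sum>j<K. indicator (S j) (X \<omega>) * (Y \<omega> - G j - Bt j * Yh \<omega>)^2) \<partial>M)"
    proof (rule Bochner_Integration.integral_cong[OF refl])
      fix \<omega> assume \<omega>: "\<omega> \<in> space M"
      obtain j0 where j0: "j0 < K" "X \<omega> \<in> S j0" using cover[OF \<omega>] by blast
      have "(\<Sum>j<K. indicator (S j) (X \<omega>) * (Y \<omega> - G j - Bt j * Yh \<omega>)^2)
          = (\<Sum>j<K. if j = j0 then (Y \<omega> - G j0 - Bt j0 * Yh \<omega>)^2 else 0)"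
      proof (rule sum.cong[OF refl])
        fix j assume "j \<in> {..<K}"
        then show "indicator (S j) (X \<omega>) * (Y \<omega> - G j - Bt j * Yh \<omega>)^2
          = (if j = j0 then (Y \<omega> - G j0 - Bt j0 * Yh \<omega>)^2 else 0)"
          using mc j0 by (auto simp: indicator_def) blast
      qed
      also have "\<dots> = (Y \<omega> - G j0 - Bt j0 * Yh \<omega>)^2" using j0 by simp
      finally show "(Y \<omega> - G (part_index K S (X \<omega>)) - Bt (part_index K S (X \<omega>)) * Yh \<omega>)\<^sup>2
          = (\<Sum>j<K. indicator (S j) (X \<omega>) * (Y \<omega> - G j - Bt j * Yh \<omega>)^2)"
        using Jeq[OF \<omega> j0] by simp
    qed
    also have "\<dots> = (\<Sum>j<K. T G Bt j)"
      unfolding T_def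
      by (rule Bochner_Integration.integral_sum[where f="\<lambda>j \<omega>. indicator (S j) (X \<omega>) * (Y \<omega> - G j - Bt j * Yh \<omega>)^2"])
        (use intT in auto)
    finally show ?thesis .
  qed
  define I where "I = (\<lambda>c d. \<integral>\<omega>. indicator (S k) (X \<omega>) * (Y \<omega> - c - d * Yh \<omega>)^2 \<partial>M)"
  have locmin: "I (\<gamma> k) (\<beta> k) \<le> I c d" for c d
  proof -
    have "(\<Sum>j<K. T \<gamma> \<beta> j) \<le> (\<Sum>j<K. T (\<gamma>(k := c)) (\<beta>(k := d)) j)"
      using assms(12) decomp by metis
    also have "(\<Sum>j<K. T (\<gamma>(k := c)) (\<beta>(k := d)) j)
       = (\<Sum>j<K. T \<gamma> \<beta> j + (if j = k then I c d - I (\<gamma> k) (\<beta> k) else 0))"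
      by (rule sum.cong[OF refl]) (auto simp: T_def I_def)
    also have "\<dots> = (\<Sum>j<K. T \<gamma> \<beta> j) + (I c d - I (\<gamma> k) (\<beta> k))"
      using kK by (simp add: sum.distrib)
    finally show ?thesis by simp
  qed
  define P where "P = measure M {\<omega> \<in> space M. X \<omega> \<in> S k}"
  have ce: "cond_exp_on M X (S k) Z = (\<integral>\<omega>. indicator (S k) (X \<omega>) * Z \<omega> \<partial>M) / P" for Z
    unfolding cond_exp_on_def P_def by simp
  show "cond_exp_on M X (S k) (\<lambda>\<omega>. (Y \<omega> - \<gamma> k - \<beta> k * Yh \<omega>)\<^sup>2)
             + 4 * (cond_cov_on M X (S k) Y Yh)\<^sup>2
         \<le> cond_exp_on M X (S k) (\<lambda>\<omega>. (Y \<omega> - f (X \<omega>))\<^sup>2) + 2 * \<alpha>"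
  proof (cases "P = 0")
    case True
    then show ?thesis unfolding cond_cov_on_def ce using assms(8) by simp
  next
    case False
    then have Ppos: "P > 0" unfolding P_def using measure_nonneg[of M] by (metis less_eq_real_def)
    define i where "i = (\<lambda>\<omega>. indicator (S k) (X \<omega>) :: real)"
    have iD: "\<And>\<omega>. indicator (S k) (X \<omega>) = i \<omega>" unfolding i_def by simp
    have im: "i \<in> borel_measurable M" using measS[OF kK] unfolding i_def by simp
    have i01: "0 \<le> i \<omega> \<and> i \<omega> \<le> 1" for \<omega> unfolding i_def by (simp add: indicator_def)
    have intI: "integrable M (\<lambda>\<omega>. i \<omega> * Z \<omega>)"
      if Zm: "Z \<in> borel_measurable M" and Zb: "\<And>\<omega>. \<omega> \<in> space M \<Longrightarrow> \<bar>Z \<omega>\<bar> \<le> 1" for Z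
    proof (rule bint[OF assms(1), where B=1])
      show "(\<lambda>\<omega>. i \<omega> * Z \<omega>) \<in> borel_measurable M" using im Zm by measurable
      fix \<omega> assume "\<omega> \<in> space M"
      then have "\<bar>Z \<omega>\<bar> \<le> 1" by (rule Zb)
      then show "\<bar>i \<omega> * Z \<omega>\<bar> \<le> 1" using i01[of \<omega>]
        by (simp add: abs_mult mult_le_one)
    qed
    have fm: "f \<in> borel_measurable N" using assms(7) fF by blast
    have Fm: "(\<lambda>\<omega>. f (X \<omega>)) \<in> borel_measurable M" using measurable_compose[OF assms(2) fm] by simp
    have Fb: "\<And>\<omega>. \<omega> \<in> space M \<Longrightarrow> 0 \<le> f (X \<omega>) \<and> f (X \<omega>) \<le> 1" using assms(7) fF Xsp by blast
    have b1: "\<bar>u * w\<bar> \<le> 1" if "0 \<le> u \<and> u \<le> 1" "0 \<le> w \<and> w \<le> 1" for u w :: real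
      using that by (simp add: abs_mult mult_le_one)
    have i1: "integrable M i" using intI[of "\<lambda>_. 1"] by simp
    have iY: "integrable M (\<lambda>\<omega>. i \<omega> * Y \<omega>)" using Ym by (intro intI assms(3)) auto
    have iH: "integrable M (\<lambda>\<omega>. i \<omega> * Yh \<omega>)" using Hm by (intro intI assms(4)) auto
    have iF: "integrable M (\<lambda>\<omega>. i \<omega> * f (X \<omega>))" using Fb by (intro intI Fm) auto
    have iYY: "integrable M (\<lambda>\<omega>. i \<omega> * (Y \<omega> * Y \<omega>))"
      using Ym assms(3) by (intro intI b1) auto
    have iYH: "integrable M (\<lambda>\<omega>. i \<omega> * (Y \<omega> * Yh \<omega>))"
      using Ym Hm assms(3,4) by (intro intI b1) auto
    have iHH: "integrable M (\<lambda>\<omega>. i \<omega> * (Yh \<omega> * Yh \<omega>))"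
      using Hm assms(4) by (intro intI b1) auto
    have iFF: "integrable M (\<lambda>\<omega>. i \<omega> * (f (X \<omega>) * f (X \<omega>)))"
      using Fb Fm by (intro intI b1) auto
    have iFY: "integrable M (\<lambda>\<omega>. i \<omega> * (f (X \<omega>) * Y \<omega>))"
      using Fb Ym Fm assms(3) by (intro intI b1) auto
    have iP: "integral\<^sup>L M i = P"
    proof -
      have "integral\<^sup>L M i = integral\<^sup>L M (indicator (X -` S k \<inter> space M))"
        by (rule Bochner_Integration.integral_cong) (auto simp: i_def indicator_def)
      also have "\<dots> = P" unfolding P_def by (simp add: Int_absorb2 vimage_def Collect_conj_eq Int_commute)
      finally show ?thesis .
    qed
    have PnZ: "P \<noteq> 0" using Ppos by simp
    define eY where "eY = (\<integral>\<omega>. i \<omega> * Y \<omega> \<partial>M) / P"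
    define eH where "eH = (\<integral>\<omega>. i \<omega> * Yh \<omega> \<partial>M) / P"
    define eF where "eF = (\<integral>\<omega>. i \<omega> * f (X \<omega>) \<partial>M) / P"
    define eYY where "eYY = (\<integral>\<omega>. i \<omega> * (Y \<omega> * Y \<omega>) \<partial>M) / P"
    define eYH where "eYH = (\<integral>\<omega>. i \<omega> * (Y \<omega> * Yh \<omega>) \<partial>M) / P"
    define eHH where "eHH = (\<integral>\<omega>. i \<omega> * (Yh \<omega> * Yh \<omega>) \<partial>M) / P"
    define eFF where "eFF = (\<integral>\<omega>. i \<omega> * (f (X \<omega>) * f (X \<omega>)) \<partial>M) / P"
    define eFY where "eFY = (\<integral>\<omega>. i \<omega> * (f (X \<omega>) * Y \<omega>) \<partial>M) / P"
    have r: "(\<integral>\<omega>. i \<omega> * Y \<omega> \<partial>M) = eY * P" "(\<integral>\<omega>. i \<omega> * Yh \<omega> \<partial>M) = eH * P"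
      "(\<integral>\<omega>. i \<omega> * f (X \<omega>) \<partial>M) = eF * P" "(\<integral>\<omega>. i \<omega> * (Y \<omega> * Y \<omega>) \<partial>M) = eYY * P"
      "(\<integral>\<omega>. i \<omega> * (Y \<omega> * Yh \<omega>) \<partial>M) = eYH * P" "(\<integral>\<omega>. i \<omega> * (Yh \<omega> * Yh \<omega>) \<partial>M) = eHH * P"
      "(\<integral>\<omega>. i \<omega> * (f (X \<omega>) * f (X \<omega>)) \<partial>M) = eFF * P"
      "(\<integral>\<omega>. i \<omega> * (f (X \<omega>) * Y \<omega>) \<partial>M) = eFY * P"
      unfolding eY_def eH_def eF_def eYY_def eYH_def eHH_def eFF_def eFY_def using PnZ by simp_all
    have expI: "I c d / P = eYY - 2*c*eY - 2*d*eYH + c^2 + 2*c*d*eH + d^2*eHH" for c d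
    proof -
      have "I c d = (\<integral>\<omega>. i \<omega> * (Y \<omega> * Y \<omega>) - 2*c*(i \<omega> * Y \<omega>) - 2*d*(i \<omega> * (Y \<omega> * Yh \<omega>))
           + c^2 * i \<omega> + 2*c*d*(i \<omega> * Yh \<omega>) + d^2*(i \<omega> * (Yh \<omega> * Yh \<omega>)) \<partial>M)"
        unfolding I_def iD by (intro Bochner_Integration.integral_cong) (auto simp: power2_eq_square algebra_simps)
      also have "\<dots> = eYY * P - 2*c*(eY*P) - 2*d*(eYH*P) + c^2 * P + 2*c*d*(eH*P) + d^2*(eHH*P)"
        using i1 iY iH iYY iYH iHH by (simp add: iP r)
      finally show ?thesis using PnZ by (simp add: field_simps)
    qed
    have expF: "cond_exp_on M X (S k) (\<lambda>\<omega>. (Y \<omega> - f (X \<omega>))\<^sup>2) = eYY - 2*eFY + eFF"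
    proof -
      have "(\<integral>\<omega>. i \<omega> * (Y \<omega> - f (X \<omega>))\<^sup>2 \<partial>M) = (\<integral>\<omega>. i \<omega> * (Y \<omega> * Y \<omega>) - 2*(i \<omega> * (f (X \<omega>) * Y \<omega>))
           + i \<omega> * (f (X \<omega>) * f (X \<omega>)) \<partial>M)"
        by (intro Bochner_Integration.integral_cong) (auto simp: power2_eq_square algebra_simps)
      also have "\<dots> = eYY * P - 2*(eFY*P) + eFF * P"
        using iYY iFY iFF by (simp add: r)
      finally show ?thesis using PnZ unfolding ce iD by (simp add: field_simps)
    qed
    have varF: "eF^2 \<le> eFF"
    proof -
      have "0 \<le> (\<integral>\<omega>. i \<omega> * (f (X \<omega>) - eF)\<^sup>2 \<partial>M)"
        using i01 by (intro Bochner_Integration.integral_nonneg) simp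
      also have "(\<integral>\<omega>. i \<omega> * (f (X \<omega>) - eF)\<^sup>2 \<partial>M) = (\<integral>\<omega>. i \<omega> * (f (X \<omega>) * f (X \<omega>))
          - 2*eF*(i \<omega> * f (X \<omega>)) + eF^2 * i \<omega> \<partial>M)"
        by (intro Bochner_Integration.integral_cong) (auto simp: power2_eq_square algebra_simps)
      also have "\<dots> = eFF * P - 2*eF*(eF*P) + eF^2 * P"
        using iFF iF i1 by (simp add: r iP)
      also have "\<dots> = (eFF - eF^2) * P" by (simp add: power2_eq_square algebra_simps)
      finally have "0 \<le> (eFF - eF^2) * P" .
      then show ?thesis using Ppos by (simp add: zero_le_mult_iff)
    qed
    have HH: "eHH \<le> eH"
    proof -
      have "(\<integral>\<omega>. i \<omega> * (Yh \<omega> * Yh \<omega>) \<partial>M) \<le> (\<integral>\<omega>. i \<omega> * Yh \<omega> \<partial>M)"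
      proof (rule integral_mono[OF iHH iH])
        fix \<omega> assume "\<omega> \<in> space M"
        then have "Yh \<omega> * Yh \<omega> \<le> Yh \<omega>" using Hm by (simp add: mult_left_le)
        then show "i \<omega> * (Yh \<omega> * Yh \<omega>) \<le> i \<omega> * Yh \<omega>" using i01 by (simp add: mult_left_mono)
      qed
      then show ?thesis unfolding eHH_def eH_def using Ppos by (simp add: divide_right_mono)
    qed
    have ind: "\<bar>eFY - eF * eY\<bar> \<le> \<alpha>"
    proof -
      have "indistinguishable M X F Y \<alpha> (S k)" using mc kK by blast
      then have "\<bar>cond_cov_on M X (S k) (\<lambda>\<omega>. f (X \<omega>)) Y\<bar> \<le> \<alpha>"
        unfolding indistinguishable_def using fF by blast
      then show ?thesis unfolding cond_cov_on_def ce iD eFY_def eF_def eY_def by simp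
    qed
    define b0 where "b0 = 4*(eYH - eY*eH)"
    define g0 where "g0 = eY - b0*eH"
    have L: "I (\<gamma> k) (\<beta> k) / P \<le> eYY - 2*g0*eY - 2*b0*eYH + g0^2 + 2*g0*b0*eH + b0^2*eHH"
      using divide_right_mono[OF locmin[of g0 b0], of P] Ppos expI[of g0 b0] by simp
    have main: "I (\<gamma> k) (\<beta> k) / P + 4*(eYH - eY*eH)^2 \<le> eYY - 2*eFY + eFF + 2*\<alpha>"
      by (rule alg[OF L g0_def b0_def HH varF ind])
    have lhs1: "cond_exp_on M X (S k) (\<lambda>\<omega>. (Y \<omega> - \<gamma> k - \<beta> k * Yh \<omega>)\<^sup>2) = I (\<gamma> k) (\<beta> k) / P"
      unfolding ce I_def ..
    have cov: "cond_cov_on M X (S k) Y Yh = eYH - eY*eH"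
      unfolding cond_cov_on_def ce iD eYH_def eY_def eH_def by simp
    show ?thesis using main unfolding lhs1 cov expF .
  qed
qed

end
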